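(* Let $X$ be a Minkowski space whose closed unit ball has a proper face that is not a polytope. Then there exists an infinite M-set in $X$.
   Context: A Minkowski space is a finite-dimensional real normed space $(X,\|\cdot\|)$. For a set $S\subseteq X$, its midpoint set is $M(S)=\{\tfrac12(x+y): x,y\in S,\ x\neq y\}$. A set $S\subseteq X$ is an M-set if every vector in $M(S)$ has norm exactly $1$ and every vector in $S$ has norm strictly greater than $1$. *)

theory Defs
  imports "HOL-Analysis.Analysis"
begin

definition minkowski_space :: "'a::real_normed_vector itself \<Rightarrow> bool" where
  "minkowski_space _ \<longleftrightarrow> (\<exists>B::'a set. finite B \<and> span B = UNIV)"

definition midpoint_set :: "'a::real_normed_vector set \<Rightarrow> 'a set" where
  "midpoint_set S = {(1/2) *\<^sub>R (x + y) | x y. x \<in> S \<and> y \<in> S \<and> x \<noteq> y}"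

definition M_set :: "'a::real_normed_vector set \<Rightarrow> bool" where
  "M_set S \<longleftrightarrow> (\<forall>m \<in> midpoint_set S. norm m = 1) \<and> (\<forall>x \<in> S. norm x > 1)"

end

theory Submission
  imports Defs
begin


lemma coord_bound:
  fixes B :: "'a::real_normed_vector set"
  assumes fin: "finite B" and ind: "independent B" and sp: "span B = UNIV"
  shows "\<exists>C>0. \<forall>x b. \<bar>representation B x b\<bar> \<le> C * norm x"
proof (cases "B = {}")
  case True
  then have "\<And>x::'a. x = 0" using sp by (metis UNIV_I span_empty singletonD)
  then have "\<And>x b. representation B x b = 0" by (metis representation_zero)
  then show ?thesis by (intro exI[of _ 1]) auto
next
  case False
  define K :: "('a \<Rightarrow> real) set" where "K = PiE UNIV (\<lambda>b. if b \<in> B then {-1..1} else {0})"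
  have "compactin (product_topology (\<lambda>_. euclidean) UNIV) K"
    unfolding K_def compactin_PiE by auto
  then have cK: "compact K" by (simp add: euclidean_product_topology)
  define Sg where "Sg = K \<inter> {t. (\<Sum>b\<in>B. \<bar>t b\<bar>) = 1}"
  have "closed {t::'a\<Rightarrow>real. (\<Sum>b\<in>B. \<bar>t b\<bar>) = 1}"
  proof (rule closed_Collect_eq)
    have "\<And>b. continuous_on UNIV (\<lambda>t::'a\<Rightarrow>real. t b)" by simp
    then show "continuous_on UNIV (\<lambda>t::'a\<Rightarrow>real. (\<Sum>b\<in>B. \<bar>t b\<bar>))"
      by (intro continuous_on_sum continuous_on_rabs) auto
  qed simp
  then have cS: "compact Sg" unfolding Sg_def using cK by auto
  obtain b0 where b0: "b0 \<in> B" using False by auto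
  have "(\<lambda>b. if b = b0 then 1 else 0) \<in> Sg"
  proof -
    have "(\<Sum>b\<in>B. \<bar>if b = b0 then 1 else 0::real\<bar>) = (\<Sum>b\<in>B. if b = b0 then 1 else 0)"
      by (rule sum.cong) auto
    also have "\<dots> = 1" using b0 fin by (simp add: sum.delta)
    finally show ?thesis unfolding Sg_def K_def using b0 by (auto simp: PiE_iff)
  qed
  then have neS: "Sg \<noteq> {}" by auto
  define g where "g t = norm (\<Sum>b\<in>B. t b *\<^sub>R b)" for t :: "'a \<Rightarrow> real"
  have coo: "\<And>b. continuous_on Sg (\<lambda>t::'a\<Rightarrow>real. t b)"
    by (rule continuous_on_subset[OF continuous_on_product_coordinates]) simp
  have "continuous_on Sg g" unfolding g_def
    by (intro continuous_on_norm continuous_on_sum continuous_on_scaleR coo continuous_on_const)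
  then obtain s where sS: "s \<in> Sg" and smin: "\<And>t. t \<in> Sg \<Longrightarrow> g s \<le> g t"
    using continuous_attains_inf[OF cS neS] by blast
  have gpos: "g s > 0"
  proof (rule ccontr)
    assume "\<not> g s > 0"
    then have "(\<Sum>b\<in>B. s b *\<^sub>R b) = 0" unfolding g_def by simp
    then have "\<forall>b\<in>B. s b = 0" using ind fin dependent_finite by blast
    then have "(\<Sum>b\<in>B. \<bar>s b\<bar>) = 0" by simp
    with sS show False unfolding Sg_def by simp
  qed
  show ?thesis
  proof (intro exI[of _ "1 / g s"] conjI allI)
    show "1 / g s > 0" using gpos by simp
    fix x b
    define r where "r = representation B x"
    have xr: "x = (\<Sum>b\<in>B. r b *\<^sub>R b)"
      unfolding r_def using sum_representation_eq[OF ind _ fin] sp by simp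
    have rB: "\<And>b. b \<notin> B \<Longrightarrow> r b = 0" unfolding r_def using representation_ne_zero by blast
    define s' where "s' = (\<Sum>b\<in>B. \<bar>r b\<bar>)"
    have rle: "\<bar>r b\<bar> \<le> s'"
    proof (cases "b \<in> B")
      case True
      then show ?thesis unfolding s'_def using fin
        by (intro member_le_sum) auto
    next
      case False then show ?thesis using rB s'_def by (simp add: sum_nonneg)
    qed
    show "\<bar>representation B x b\<bar> \<le> 1 / g s * norm x"
    proof (cases "s' = 0")
      case True
      then show ?thesis using rle r_def gpos by simp
    next
      case False
      then have s'pos: "s' > 0" unfolding s'_def by (metis sum_nonneg abs_ge_zero order_le_less)
      define t where "t b = r b / s'" for b
      have "t \<in> Sg"
      proof -
        have "\<bar>t b\<bar> \<le> 1" for b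
        proof (cases "b\<in>B")
          case True
          have "\<bar>r b\<bar> \<le> s'" unfolding s'_def using fin True by (intro member_le_sum) auto
          then show ?thesis unfolding t_def using s'pos by (simp add: abs_div divide_le_eq_1)
        next
          case False then show ?thesis using rB t_def by simp
        qed
        moreover have "(\<Sum>b\<in>B. \<bar>t b\<bar>) = 1"
          unfolding t_def using s'pos by (simp add: abs_div sum_divide_distrib[symmetric] s'_def)
        moreover have "\<And>b. b \<notin> B \<Longrightarrow> t b = 0" using rB t_def by simp
        ultimately show ?thesis unfolding Sg_def K_def
          by (auto simp: PiE_iff abs_le_iff)
      qed
      then have "g s \<le> g t" by (rule smin)
      also have "g t = norm x / s'"
      proof -
        have "(\<Sum>b\<in>B. t b *\<^sub>R b) = inverse s' *\<^sub>R x"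
          unfolding xr t_def scaleR_sum_right by (simp add: divide_inverse mult.commute)
        then show ?thesis unfolding g_def using s'pos by (simp add: divide_inverse mult.commute)
      qed
      finally have "g s * s' \<le> norm x" using s'pos by (simp add: le_divide_eq)
      then have "s' \<le> norm x / g s" using gpos by (simp add: le_divide_eq mult.commute)
      then show ?thesis using rle r_def by simp
    qed
  qed
qed

lemma fd_compact:
  fixes B S :: "'a::real_normed_vector set"
  assumes fin: "finite B" and ind: "independent B" and sp: "span B = UNIV"
    and bS: "bounded S" and cS: "closed S"
  shows "compact S"
proof -
  obtain C where C: "C > 0" "\<And>x b. \<bar>representation B x b\<bar> \<le> C * norm x"
    using coord_bound[OF fin ind sp] by blast
  obtain R where R: "\<And>x. x \<in> S \<Longrightarrow> norm x \<le> R" using bS bounded_iff by blast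
  define M where "M = C * \<bar>R\<bar>"
  define K :: "('a \<Rightarrow> real) set" where "K = PiE UNIV (\<lambda>b. if b \<in> B then {-M..M} else {0})"
  have "compactin (product_topology (\<lambda>_. euclidean) UNIV) K"
    unfolding K_def compactin_PiE by auto
  then have cK: "compact K" by (simp add: euclidean_product_topology)
  define L where "L t = (\<Sum>b\<in>B. t b *\<^sub>R b)" for t :: "'a \<Rightarrow> real"
  have coo: "\<And>b. continuous_on K (\<lambda>t::'a\<Rightarrow>real. t b)"
    by (rule continuous_on_subset[OF continuous_on_product_coordinates]) simp
  have "continuous_on K L" unfolding L_def
    by (intro continuous_on_sum continuous_on_scaleR coo continuous_on_const)
  then have cLK: "compact (L ` K)" using cK compact_continuous_image by blast
  have "S \<subseteq> L ` K"
  proof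
    fix x assume xS: "x \<in> S"
    have "x = L (representation B x)"
      unfolding L_def using sum_representation_eq[OF ind _ fin] sp by simp
    moreover have "representation B x \<in> K"
    proof -
      have A1: "\<bar>representation B x b\<bar> \<le> M" for b
      proof -
        have "C * norm x \<le> C * \<bar>R\<bar>" using R[OF xS] C(1) by (intro mult_left_mono) auto
        then show ?thesis using C(2)[of x b] M_def by linarith
      qed
      have A2: "b \<notin> B \<Longrightarrow> representation B x b = 0" for b
        using representation_ne_zero by blast
      show ?thesis unfolding K_def
      proof (rule PiE_I)
        fix b
        show "representation B x b \<in> (if b \<in> B then {-M..M} else {0})"
          using A1[of b] A2[of b] by (cases "b \<in> B") (auto simp: abs_le_iff)
      qed auto
    qed
    ultimately show "x \<in> L ` K" by blast
  qed
  then have "S = L ` K \<inter> S" by blast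
  then show ?thesis using compact_Int_closed[OF cLK cS] by simp
qed

lemma face_sphere:
  fixes F :: "'a::real_normed_vector set"
  assumes fF: "F face_of cball 0 1" and ne: "F \<noteq> cball 0 1"
  shows "\<And>p. p \<in> F \<Longrightarrow> norm p = 1"
proof -
  fix p assume pF: "p \<in> F"
  have Fsub: "F \<subseteq> cball 0 1" using fF face_of_imp_subset by blast
  then have "norm p \<le> 1" using pF by auto
  moreover have "\<not> norm p < 1"
  proof
    assume lt: "norm p < 1"
    have "cball 0 1 \<subseteq> F"
    proof
      fix y :: 'a assume yB: "y \<in> cball 0 1"
      show "y \<in> F"
      proof (cases "y = p")
        case True then show ?thesis using pF by simp
      next
        case False
        define t where "t = (1 - norm p) / 2"
        have t0: "t > 0" using lt t_def by simp
        define z where "z = (1 + t) *\<^sub>R p - t *\<^sub>R y"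
        have "norm z \<le> norm ((1 + t) *\<^sub>R p) + norm (t *\<^sub>R y)"
          unfolding z_def by (rule norm_triangle_ineq4)
        also have "\<dots> = (1 + t) * norm p + t * norm y" using t0 by simp
        also have "\<dots> \<le> (1 + t) * norm p + t * 1"
          using yB t0 by (intro add_left_mono mult_left_mono) auto
        also have "\<dots> \<le> 1"
        proof -
          have "(1 + t) * norm p + t * 1 = 1 - (1 - norm p) * (1 - norm p) / 2"
            unfolding t_def by (simp add: field_simps)
          moreover have "0 \<le> (1 - norm p) * (1 - norm p)" by simp
          ultimately show ?thesis by simp
        qed
        finally have zB: "z \<in> cball 0 1" by simp
        have yz: "y \<noteq> z"
        proof
          assume "y = z"
          then have "(1 + t) *\<^sub>R y = (1 + t) *\<^sub>R p" unfolding z_def by (simp add: algebra_simps)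
          then have "y = p" using t0 by simp
          with False show False by simp
        qed
        define u where "u = 1 / (1 + t)"
        have u1: "u * (1 + t) = 1" unfolding u_def using t0 by simp
        then have u2: "1 - u = u * t" by (simp add: algebra_simps)
        have "(1 - u) *\<^sub>R y + u *\<^sub>R z = (u * t) *\<^sub>R y + (u * (1 + t)) *\<^sub>R p - (u * t) *\<^sub>R y"
          unfolding z_def u2 by (simp add: algebra_simps)
        then have "p = (1 - u) *\<^sub>R y + u *\<^sub>R z" using u1 by simp
        moreover have "0 < u" "u < 1" unfolding u_def using t0 by auto
        ultimately have "p \<in> open_segment y z" using yz by (auto simp: in_segment)
        then show ?thesis using fF yB zB pF unfolding face_of_def by blast
      qed
    qed
    then show False using Fsub ne by blast
  qed
  ultimately show "norm p = 1" by simp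
qed

lemma M_construct:
  fixes A F :: "'a::real_normed_vector set" and e :: 'a
  assumes Aaff: "\<And>a b t. a \<in> A \<Longrightarrow> b \<in> A \<Longrightarrow> (1 - t) *\<^sub>R a + t *\<^sub>R b \<in> A"
    and FA: "F \<subseteq> A" and eF: "e \<in> F"
    and P: "\<And>d. d > 0 \<Longrightarrow> \<exists>x r. x \<in> A \<and> norm (x - e) < d \<and> x \<notin> F \<and> r > 0 \<and>
              (\<forall>y\<in>A. norm (y - (1/2) *\<^sub>R (e + x)) < r \<longrightarrow> y \<in> F)"
  shows "\<exists>X::nat \<Rightarrow> 'a. inj X \<and> (\<forall>k. X k \<notin> F \<and> (1/2) *\<^sub>R (e + X k) \<in> F) \<and>
           (\<forall>j k. j \<noteq> k \<longrightarrow> (1/2) *\<^sub>R (X j + X k) \<in> F)"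
proof -
  define Q where "Q d x r \<longleftrightarrow> x \<in> A \<and> norm (x - e) < d \<and> x \<notin> F \<and> r > 0 \<and>
              (\<forall>y\<in>A. norm (y - (1/2) *\<^sub>R (e + x)) < r \<longrightarrow> y \<in> F)" for d x r
  define Xf where "Xf d = fst (SOME p. Q d (fst p) (snd p))" for d
  define Rf where "Rf d = snd (SOME p. Q d (fst p) (snd p))" for d
  have QXR: "Q d (Xf d) (Rf d)" if dpos: "d > 0" for d
  proof -
    obtain x r where "Q d x r" using P[OF dpos] unfolding Q_def by blast
    then have "\<exists>p. Q d (fst p) (snd p)" by (intro exI[of _ "(x, r)"]) simp
    from someI_ex[OF this] show ?thesis unfolding Xf_def Rf_def .
  qed
  define D where "D = rec_nat 1 (\<lambda>_ d. min d (min (2 * Rf d) (norm (Xf d - e))))"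
  have D0: "D 0 = 1" unfolding D_def by simp
  have DS: "D (Suc k) = min (D k) (min (2 * Rf (D k)) (norm (Xf (D k) - e)))" for k
    unfolding D_def by simp
  have Dpos: "D k > 0" for k
  proof (induction k)
    case 0 then show ?case using D0 by simp
  next
    case (Suc k)
    have q: "Q (D k) (Xf (D k)) (Rf (D k))" using QXR Suc by blast
    then have "Xf (D k) \<noteq> e" using eF unfolding Q_def by auto
    then have "norm (Xf (D k) - e) > 0" by simp
    then show ?case using Suc q unfolding DS Q_def by simp
  qed
  have Dmono: "j \<le> k \<Longrightarrow> D k \<le> D j" for j k
    by (rule lift_Suc_antimono_le[of D]) (auto simp: DS)
  define X where "X k = Xf (D k)" for k
  define R where "R k = Rf (D k)" for k
  have QX: "Q (D k) (X k) (R k)" for k unfolding X_def R_def using QXR Dpos by blast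
  have key: "norm (X k - e) < 2 * R j \<and> norm (X k - e) < norm (X j - e)" if jk: "j < k" for j k
  proof -
    have "norm (X k - e) < D k" using QX unfolding Q_def by blast
    also have "D k \<le> D (Suc j)" using jk by (intro Dmono) simp
    finally show ?thesis unfolding DS X_def R_def by simp
  qed
  have XA: "X k \<in> A" for k using QX unfolding Q_def by blast
  have mid: "(1/2) *\<^sub>R (X j + X k) \<in> F" if jk: "j < k" for j k
  proof -
    have room: "\<forall>y\<in>A. norm (y - (1/2) *\<^sub>R (e + X j)) < R j \<longrightarrow> y \<in> F"
      using QX unfolding Q_def by blast
    have inA: "(1/2) *\<^sub>R (X j + X k) \<in> A"
      using Aaff[OF XA[of j] XA[of k], of "1/2"] by (simp add: scaleR_add_right)
    have "(1/2) *\<^sub>R (X j + X k) - (1/2) *\<^sub>R (e + X j) = (1/2) *\<^sub>R (X k - e)"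
      by (simp add: algebra_simps)
    then have "norm ((1/2) *\<^sub>R (X j + X k) - (1/2) *\<^sub>R (e + X j)) < R j"
      using key[OF jk] by simp
    then show ?thesis using room inA by blast
  qed
  show ?thesis
  proof (intro exI[of _ X] conjI allI impI)
    show "inj X"
    proof (rule injI, rule ccontr)
      fix j k assume eq: "X j = X k" and ne: "j \<noteq> k"
      show False
      proof (cases "j < k")
        case True then show False using key[OF True] eq by simp
      next
        case False then have "k < j" using ne by simp
        then show False using key[of k j] eq by simp
      qed
    qed
    fix k
    show "X k \<notin> F" using QX unfolding Q_def by blast
    have room: "\<forall>y\<in>A. norm (y - (1/2) *\<^sub>R (e + X k)) < R k \<longrightarrow> y \<in> F"
      and "R k > 0" using QX unfolding Q_def by blast+
    moreover have "(1/2) *\<^sub>R (e + X k) \<in> A"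
      using Aaff[OF _ XA[of k], of e "1/2"] FA eF by (auto simp: scaleR_add_right)
    ultimately show "(1/2) *\<^sub>R (e + X k) \<in> F" by simp
  next
    fix j k :: nat assume "j \<noteq> k"
    then show "(1/2) *\<^sub>R (X j + X k) \<in> F"
      using mid[of j k] mid[of k j] by (cases "j < k") (auto simp: add.commute)
  qed
qed

lemma convex_cone_sum:
  fixes F :: "'a::real_vector set"
  assumes cvx: "convex F" and v0: "v0 \<in> F" and fin: "finite U"
    and uF: "\<And>u. u \<in> U \<Longrightarrow> u + v0 \<in> F"
  shows "(\<forall>u\<in>U. t u \<ge> 0) \<Longrightarrow> sum t U \<le> 1 \<Longrightarrow> v0 + (\<Sum>u\<in>U. t u *\<^sub>R u) \<in> F"
  using fin uF
proof (induction U arbitrary: t rule: finite_induct)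
  case empty then show ?case using v0 by simp
next
  case (insert a U)
  have ta: "t a \<ge> 0" using insert.prems by simp
  have tU: "\<forall>u\<in>U. t u \<ge> 0" using insert.prems by simp
  have sU: "sum t U \<ge> 0" using tU by (simp add: sum_nonneg)
  have tot: "t a + sum t U \<le> 1" using insert.prems insert.hyps by simp
  show ?case
  proof (cases "t a = 1")
    case True
    then have "sum t U = 0" using tot sU by simp
    then have "\<forall>u\<in>U. t u = 0" using tU insert.hyps(1) sum_nonneg_eq_0_iff by blast
    then have "(\<Sum>u\<in>U. t u *\<^sub>R u) = 0" by simp
    moreover have "a + v0 \<in> F" using insert.prems(3) by simp
    ultimately show ?thesis using True insert.hyps by (simp add: add.commute)
  next
    case False
    define l where "l = t a"
    have l1: "l < 1" using False tot sU l_def by simp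
    define t' where "t' u = t u / (1 - l)" for u
    have "sum t' U = sum t U / (1 - l)" unfolding t'_def by (simp add: sum_divide_distrib)
    also have "\<dots> \<le> 1" using tot l1 l_def by (simp add: divide_le_eq_1)
    finally have "sum t' U \<le> 1" .
    moreover have "\<forall>u\<in>U. t' u \<ge> 0" using tU l1 t'_def by simp
    ultimately have p: "v0 + (\<Sum>u\<in>U. t' u *\<^sub>R u) \<in> F"
      using insert.IH insert.prems(3) by simp
    have q: "a + v0 \<in> F" using insert.prems(3) by simp
    have "(1 - l) *\<^sub>R (v0 + (\<Sum>u\<in>U. t' u *\<^sub>R u)) + l *\<^sub>R (a + v0) \<in> F"
      using convexD[OF cvx p q] l1 ta l_def by simp
    moreover have S: "(1 - l) *\<^sub>R (\<Sum>u\<in>U. t' u *\<^sub>R u) = (\<Sum>u\<in>U. t u *\<^sub>R u)"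
      unfolding scaleR_sum_right t'_def using l1 by (intro sum.cong) auto
    moreover have "(1 - l) *\<^sub>R (v0 + (\<Sum>u\<in>U. t' u *\<^sub>R u)) + l *\<^sub>R (a + v0)
        = v0 + (\<Sum>u\<in>insert a U. t u *\<^sub>R u)"
    proof -
      have "(1 - l) *\<^sub>R (v0 + (\<Sum>u\<in>U. t' u *\<^sub>R u)) + l *\<^sub>R (a + v0)
          = v0 + (1 - l) *\<^sub>R (\<Sum>u\<in>U. t' u *\<^sub>R u) + l *\<^sub>R a"
        by (simp add: algebra_simps)
      also have "\<dots> = v0 + (\<Sum>u\<in>insert a U. t u *\<^sub>R u)"
        unfolding S using insert.hyps l_def by simp
      finally show ?thesis .
    qed
    ultimately show ?thesis by simp
  qed
qed

lemma rel_room: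
  fixes F B0 :: "'a::real_normed_vector set"
  assumes fd: "finite B0" "span B0 = UNIV" and cvx: "convex F" and ne: "F \<noteq> {}"
  shows "\<exists>A c \<rho>. (\<forall>a b t. a \<in> A \<longrightarrow> b \<in> A \<longrightarrow> (1 - t) *\<^sub>R a + t *\<^sub>R b \<in> A) \<and> F \<subseteq> A \<and>
           c \<in> F \<and> \<rho> > 0 \<and> (\<forall>y\<in>A. norm (y - c) < \<rho> \<longrightarrow> y \<in> F)"
proof -
  obtain v0 where v0: "v0 \<in> F" using ne by blast
  define V where "V = (\<lambda>v. v - v0) ` F"
  obtain U where UV: "U \<subseteq> V" and indU: "independent U" and VU: "V \<subseteq> span U"
    using maximal_independent_subset by blast
  have finU: "finite U" using independent_span_bound[OF fd(1) indU] fd(2) by simp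
  have uF: "u + v0 \<in> F" if "u \<in> U" for u using UV that unfolding V_def by auto
  define A where "A = {y. y - v0 \<in> span U}"
  have Aaff: "\<forall>a b t. a \<in> A \<longrightarrow> b \<in> A \<longrightarrow> (1 - t) *\<^sub>R a + t *\<^sub>R b \<in> A"
  proof (intro allI impI)
    fix a b t assume "a \<in> A" "b \<in> A"
    then have "(1 - t) *\<^sub>R (a - v0) + t *\<^sub>R (b - v0) \<in> span U"
      unfolding A_def by (intro span_add span_scale) auto
    then show "(1 - t) *\<^sub>R a + t *\<^sub>R b \<in> A" unfolding A_def by (simp add: algebra_simps)
  qed
  have FA: "F \<subseteq> A" using VU unfolding A_def V_def by auto
  define Bx where "Bx = extend_basis U"
  have indBx: "independent Bx" and spBx: "span Bx = UNIV" and UBx: "U \<subseteq> Bx"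
    unfolding Bx_def using independent_extend_basis[OF indU] extend_basis_superset[OF indU]
      span_extend_basis[OF indU] by auto
  have finBx: "finite Bx" using independent_span_bound[OF fd(1) indBx] fd(2) by simp
  obtain C where C: "C > 0" "\<And>x b. \<bar>representation Bx x b\<bar> \<le> C * norm x"
    using coord_bound[OF finBx indBx spBx] by blast
  define k where "k = real (card U)"
  define a where "a = 1 / (k + 1)"
  have k0: "k \<ge> 0" unfolding k_def by simp
  have a0: "a > 0" unfolding a_def using k0 by simp
  define c where "c = v0 + (\<Sum>u\<in>U. a *\<^sub>R u)"
  have ka: "k * a \<le> 1" unfolding a_def using k0 by (simp add: field_simps)
  have cF: "c \<in> F" unfolding c_def
    using convex_cone_sum[OF cvx v0 finU uF, of "\<lambda>_. a"] a0 ka k_def by simp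
  have cU: "c - v0 \<in> span U" unfolding c_def by (auto intro: span_sum span_scale span_base)
  have rc: "representation Bx (c - v0) = (\<lambda>b. if b \<in> U then a else 0)"
  proof -
    have "representation U (c - v0) = (\<lambda>b. if b \<in> U then a else 0)"
    proof (rule representation_eqI[OF indU cU])
      show "(if b \<in> U then a else 0) \<noteq> 0 \<Longrightarrow> b \<in> U" for b by (cases "b \<in> U") auto
      have e: "{b. (if b \<in> U then a else 0) \<noteq> 0} = U" using a0 by auto
      show "finite {b. (if b \<in> U then a else 0) \<noteq> 0}" using e finU by simp
      show "(\<Sum>b | (if b \<in> U then a else 0) \<noteq> 0. (if b \<in> U then a else 0) *\<^sub>R b) = c - v0"
        unfolding e c_def by simp
    qed
    moreover have "representation Bx (c - v0) = representation U (c - v0)"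
      by (rule representation_extend[OF indBx cU UBx])
    ultimately show ?thesis by simp
  qed
  define \<rho> where "\<rho> = a * a / C"
  have \<rho>0: "\<rho> > 0" unfolding \<rho>_def using a0 C by simp
  show ?thesis
  proof (intro exI conjI ballI impI)
    show "\<forall>a b t. a \<in> A \<longrightarrow> b \<in> A \<longrightarrow> (1 - t) *\<^sub>R a + t *\<^sub>R b \<in> A" by (rule Aaff)
    show "F \<subseteq> A" by (rule FA)
    show "c \<in> F" by (rule cF)
    show "\<rho> > 0" by (rule \<rho>0)
    fix y assume yA: "y \<in> A" and close: "norm (y - c) < \<rho>"
    define r where "r = representation Bx (y - v0)"
    have yU: "y - v0 \<in> span U" using yA A_def by simp
    have "representation Bx (y - v0) = representation U (y - v0)"
      by (rule representation_extend[OF indBx yU UBx])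
    then have yrep: "y - v0 = (\<Sum>u\<in>U. r u *\<^sub>R u)"
      unfolding r_def using sum_representation_eq[OF indU yU finU order_refl] by simp
    have diff: "representation Bx (y - c) = (\<lambda>b. r b - representation Bx (c - v0) b)"
    proof -
      have "y - c = (y - v0) - (c - v0)" by simp
      then show ?thesis unfolding r_def using representation_diff[OF indBx, of "c - v0" "y - v0"] spBx
        by simp
    qed
    have bnd: "\<bar>r u - a\<bar> \<le> a * a" if "u \<in> U" for u
    proof -
      have "\<bar>r u - a\<bar> = \<bar>representation Bx (y - c) u\<bar>" using diff rc that by simp
      also have "\<dots> \<le> C * norm (y - c)" by (rule C(2))
      also have "\<dots> \<le> C * \<rho>" using close C(1) by simp
      also have "\<dots> = a * a" unfolding \<rho>_def using C(1) by simp
      finally show ?thesis .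
    qed
    have tpos: "\<forall>u\<in>U. r u \<ge> 0"
    proof
      fix u assume "u \<in> U"
      then have "r u \<ge> a - a * a" using bnd[of u] by (simp add: abs_le_iff)
      moreover have "a * a \<le> a * 1" using a0 k0 unfolding a_def by (intro mult_left_mono) auto
      ultimately show "r u \<ge> 0" by simp
    qed
    have rle: "r u \<le> a + a * a" if "u \<in> U" for u using bnd[OF that] by (simp add: abs_le_iff)
    have "sum r U \<le> (\<Sum>u\<in>U. a + a * a)"
      using rle by (intro sum_mono) simp
    also have "\<dots> = k * (a + a * a)" unfolding k_def by simp
    also have "\<dots> \<le> 1"
    proof -
      have "a * (k + 1) = 1" unfolding a_def using k0 by simp
      then have "k * a = 1 - a" by (simp add: algebra_simps)
      moreover have "k * (a + a * a) = (k * a) * (1 + a)" by (simp add: algebra_simps)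
      ultimately have "k * (a + a * a) = (1 - a) * (1 + a)" by simp
      also have "\<dots> = 1 - a * a" by (simp add: algebra_simps)
      finally show ?thesis by simp
    qed
    finally have "sum r U \<le> 1" .
    then have "v0 + (\<Sum>u\<in>U. r u *\<^sub>R u) \<in> F"
      using convex_cone_sum[OF cvx v0 finU uF] tpos by simp
    then show "y \<in> F" using yrep by (simp add: algebra_simps)
  qed
qed



definition ipB :: "'a::real_normed_vector set \<Rightarrow> 'a \<Rightarrow> 'a \<Rightarrow> real" where
  "ipB B x y = (\<Sum>b\<in>B. representation B x b * representation B y b)"

lemma rep_lin:
  fixes B :: "'a::real_normed_vector set"
  assumes ind: "independent B" and sp: "span B = UNIV"
  shows "representation B (x + y) b = representation B x b + representation B y b"
    and "representation B (x - y) b = representation B x b - representation B y b"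
    and "representation B (c *\<^sub>R x) b = c * representation B x b"
  using representation_add[OF ind, of y x] representation_diff[OF ind, of y x]
    representation_scale[OF ind, of x c] sp by auto

lemma rep_comb:
  fixes B :: "'a::real_normed_vector set"
  assumes ind: "independent B" and sp: "span B = UNIV"
  shows "representation B ((1 - u) *\<^sub>R a + u *\<^sub>R c) b = (1 - u) * representation B a b + u * representation B c b"
  using rep_lin[OF ind sp] by simp

lemma rep_cont:
  fixes B :: "'a::real_normed_vector set"
  assumes fin: "finite B" and ind: "independent B" and sp: "span B = UNIV"
  shows "continuous_on S (\<lambda>x. representation B x b)"
proof -
  obtain C where C: "C > 0" "\<And>x b. \<bar>representation B x b\<bar> \<le> C * norm x"
    using coord_bound[OF fin ind sp] by blast
  have "bounded_linear (\<lambda>x. representation B x b)"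
    by (rule bounded_linear_intro[where K = C]) (use rep_lin[OF ind sp] C(2) in \<open>auto simp: mult.commute\<close>)
  then show ?thesis by (simp add: linear_continuous_on)
qed

lemma ipB_cont:
  fixes B :: "'a::real_normed_vector set"
  assumes fin: "finite B" and ind: "independent B" and sp: "span B = UNIV"
    and that: "continuous_on S f" "continuous_on S g"
  shows "continuous_on S (\<lambda>x. ipB B (f x) (g x))"
proof -
  have "\<And>b. continuous_on S (\<lambda>x. representation B (f x) b)"
    using continuous_on_compose2[OF rep_cont[OF fin ind sp] that(1)] by blast
  moreover have "\<And>b. continuous_on S (\<lambda>x. representation B (g x) b)"
    using continuous_on_compose2[OF rep_cont[OF fin ind sp] that(2)] by blast
  ultimately show ?thesis unfolding ipB_def
    by (intro continuous_on_sum continuous_on_mult) auto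
qed

lemma ipB_pos:
  fixes B :: "'a::real_normed_vector set"
  assumes fin: "finite B" and ind: "independent B" and sp: "span B = UNIV"
  shows "x \<noteq> 0 \<Longrightarrow> ipB B x x > 0"
proof -
  assume x0: "x \<noteq> 0"
  have ge: "ipB B x x \<ge> 0" unfolding ipB_def by (intro sum_nonneg) simp
  have "ipB B x x \<noteq> 0"
  proof
    assume "ipB B x x = 0"
    then have "\<forall>b\<in>B. representation B x b * representation B x b = 0"
      unfolding ipB_def using fin by (subst sum_nonneg_eq_0_iff[symmetric]) auto
    then have "\<forall>b\<in>B. representation B x b = 0" by simp
    then have "(\<Sum>b\<in>B. representation B x b *\<^sub>R b) = 0" by simp
    moreover have "(\<Sum>b\<in>B. representation B x b *\<^sub>R b) = x"
      using sum_representation_eq[OF ind _ fin] sp by simp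
    ultimately show False using x0 by simp
  qed
  then show ?thesis using ge by simp
qed

lemma extreme_exists:
  fixes B G :: "'a::real_normed_vector set"
  assumes fin: "finite B" and ind: "independent B" and sp: "span B = UNIV"
    and cG: "compact G" and ne: "G \<noteq> {}"
  shows "\<exists>g. g extreme_point_of G"
proof -
  have "continuous_on G (\<lambda>x. ipB B x x)"
    by (rule ipB_cont[OF fin ind sp]) (auto intro: continuous_on_id)
  then obtain g where gG: "g \<in> G" and gmax: "\<And>y. y \<in> G \<Longrightarrow> ipB B y y \<le> ipB B g g"
    using continuous_attains_sup[OF cG ne] by blast
  have "g extreme_point_of G"
    unfolding extreme_point_of_def
  proof (intro conjI gG ballI notI)
    fix a c assume aG: "a \<in> G" and cG': "c \<in> G" and seg: "g \<in> open_segment a c"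
    then obtain u where ac: "a \<noteq> c" and u: "0 < u" "u < 1" and gu: "g = (1 - u) *\<^sub>R a + u *\<^sub>R c"
      by (auto simp: in_segment)
    have "ipB B g g = (1 - u) * ipB B a a + u * ipB B c c - u * (1 - u) * ipB B (a - c) (a - c)"
      unfolding ipB_def gu rep_comb[OF ind sp] rep_lin(2)[OF ind sp]
      by (simp add: sum_distrib_left sum_subtractf[symmetric] sum.distrib[symmetric]) (intro sum.cong, auto simp: algebra_simps)
    moreover have "ipB B (a - c) (a - c) > 0" using ac ipB_pos[OF fin ind sp] by simp
    moreover have "(1 - u) * ipB B a a \<le> (1 - u) * ipB B g g" using gmax[OF aG] u by simp
    moreover have "u * ipB B c c \<le> u * ipB B g g" using gmax[OF cG'] u by simp
    moreover have "u * (1 - u) > 0" using u by simp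
    ultimately have "ipB B g g < (1 - u) * ipB B g g + u * ipB B g g"
      by (smt (verit) mult_pos_pos)
    then show False by (simp add: algebra_simps)
  qed
  then show ?thesis by blast
qed

lemma finite_extreme_polytope:
  fixes B F :: "'a::real_normed_vector set"
  assumes fin: "finite B" and ind: "independent B" and sp: "span B = UNIV"
    and cF: "compact F" and cvx: "convex F" and finE: "finite {x. x extreme_point_of F}"
  shows "polytope F"
proof -
  define E where "E = {x. x extreme_point_of F}"
  have EF: "E \<subseteq> F" unfolding E_def using extreme_point_of_def by auto
  define P where "P = convex hull E"
  have PF: "P \<subseteq> F" unfolding P_def using EF cvx by (simp add: hull_minimal)
  have "F \<subseteq> P"
  proof
    fix z assume zF: "z \<in> F"
    show "z \<in> P"
    proof (rule ccontr)
      assume zP: "z \<notin> P"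
      have "E \<noteq> {}" unfolding E_def using extreme_exists[OF fin ind sp cF] zF by blast
      then have neP: "P \<noteq> {}" unfolding P_def by simp
      have cP: "compact P" unfolding P_def using finE E_def finite_imp_compact_convex_hull by blast
      have "continuous_on P (\<lambda>y. ipB B (z - y) (z - y))"
        by (rule ipB_cont[OF fin ind sp]) (auto intro!: continuous_intros)
      then obtain p where pP: "p \<in> P" and pmin: "\<And>y. y \<in> P \<Longrightarrow> ipB B (z - p) (z - p) \<le> ipB B (z - y) (z - y)"
        using continuous_attains_inf[OF cP neP] by blast
      define w where "w = z - p"
      have w0: "w \<noteq> 0" using zP pP w_def by auto
      define \<psi> where "\<psi> y = ipB B w y" for y
      have \<psi>lin: "\<psi> ((1 - u) *\<^sub>R a + u *\<^sub>R c) = (1 - u) * \<psi> a + u * \<psi> c" for u a c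
        unfolding \<psi>_def ipB_def rep_comb[OF ind sp]
        by (simp add: sum_distrib_left sum.distrib[symmetric] algebra_simps)
      have \<psi>diff: "\<psi> y - \<psi> p = ipB B w (y - p)" for y
        unfolding \<psi>_def ipB_def rep_lin(2)[OF ind sp]
        by (simp add: sum_subtractf[symmetric] algebra_simps)
      have sep: "\<psi> y \<le> \<psi> p" if yP: "y \<in> P" for y
      proof (rule ccontr)
        assume "\<not> \<psi> y \<le> \<psi> p"
        then have pos: "ipB B w (y - p) > 0" using \<psi>diff[of y] by linarith
        define v where "v = y - p"
        have v0: "v \<noteq> 0" using pos v_def unfolding ipB_def by (auto simp: representation_zero)
        have qv: "ipB B v v > 0" using ipB_pos[OF fin ind sp v0] .
        define t where "t = min 1 (ipB B w v / ipB B v v)"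
        have t0: "t > 0" "t \<le> 1" unfolding t_def using pos qv v_def by auto
        have tq: "t * ipB B v v \<le> ipB B w v" unfolding t_def using qv
          by (simp add: min_def divide_le_eq mult.commute)
        have "(1 - t) *\<^sub>R p + t *\<^sub>R y \<in> P" unfolding P_def
          using pP yP t0 P_def convexD[OF convex_convex_hull[of E]] by simp
        then have "ipB B w w \<le> ipB B (z - ((1 - t) *\<^sub>R p + t *\<^sub>R y)) (z - ((1 - t) *\<^sub>R p + t *\<^sub>R y))"
          using pmin w_def by blast
        also have "z - ((1 - t) *\<^sub>R p + t *\<^sub>R y) = w - t *\<^sub>R v"
          unfolding w_def v_def by (simp add: algebra_simps)
        also have "ipB B (w - t *\<^sub>R v) (w - t *\<^sub>R v) = ipB B w w - 2 * t * ipB B w v + t * t * ipB B v v"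
          unfolding ipB_def rep_lin[OF ind sp]
          by (simp add: sum_distrib_left sum_subtractf[symmetric] sum.distrib[symmetric] algebra_simps power2_eq_square)
        finally have "2 * t * ipB B w v \<le> t * (t * ipB B v v)" by (simp add: algebra_simps)
        then have "2 * ipB B w v \<le> t * ipB B v v" using t0 by simp
        then show False using tq pos v_def by simp
      qed
      have "continuous_on F \<psi>" unfolding \<psi>_def
        by (rule ipB_cont[OF fin ind sp]) (auto intro!: continuous_intros)
      then obtain m where mF: "m \<in> F" and mmax: "\<And>y. y \<in> F \<Longrightarrow> \<psi> y \<le> \<psi> m"
        using continuous_attains_sup[OF cF] zF by blast
      define G where "G = {y \<in> F. \<psi> y = \<psi> m}"
      have "closed {y. \<psi> y = \<psi> m}"
      proof (rule closed_Collect_eq)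
        show "continuous_on UNIV \<psi>" unfolding \<psi>_def
          by (rule ipB_cont[OF fin ind sp]) (auto intro!: continuous_intros)
      qed simp
      moreover have "G = F \<inter> {y. \<psi> y = \<psi> m}" unfolding G_def by auto
      ultimately have cG: "compact G" using compact_Int_closed[OF cF] by simp
      have "G \<noteq> {}" using mF G_def by auto
      then obtain g where gG: "g extreme_point_of G" using extreme_exists[OF fin ind sp cG] by blast
      have gGm: "g \<in> G" using gG unfolding extreme_point_of_def by blast
      then have gFm: "g \<in> F" and gpsi: "\<psi> g = \<psi> m" unfolding G_def by auto
      have gF: "g extreme_point_of F"
        unfolding extreme_point_of_def
      proof (intro conjI ballI notI)
        show "g \<in> F" by (rule gFm)
        fix a c assume aF: "a \<in> F" and cF': "c \<in> F" and seg: "g \<in> open_segment a c"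
        then obtain u where u: "0 < u" "u < 1" and gu: "g = (1 - u) *\<^sub>R a + u *\<^sub>R c"
          by (auto simp: in_segment)
        have "\<psi> g = \<psi> m" by (rule gpsi)
        moreover have "\<psi> g = (1 - u) * \<psi> a + u * \<psi> c" using gu \<psi>lin by simp
        moreover have "\<psi> a \<le> \<psi> m" "\<psi> c \<le> \<psi> m" using mmax aF cF' by auto
        ultimately have e1: "\<psi> m = (1 - u) * \<psi> a + u * \<psi> c"
          and le: "\<psi> m - \<psi> a \<ge> 0" "\<psi> m - \<psi> c \<ge> 0" by auto
        have "(1 - u) * (\<psi> m - \<psi> a) + u * (\<psi> m - \<psi> c) = \<psi> m - ((1 - u) * \<psi> a + u * \<psi> c)"
          by (simp add: algebra_simps)
        then have h1: "(1 - u) * (\<psi> m - \<psi> a) + u * (\<psi> m - \<psi> c) = 0" using e1 by simp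
        have h2: "(1 - u) * (\<psi> m - \<psi> a) \<ge> 0" "u * (\<psi> m - \<psi> c) \<ge> 0"
          using u le by (intro mult_nonneg_nonneg; simp)+
        have "(1 - u) * (\<psi> m - \<psi> a) = 0" "u * (\<psi> m - \<psi> c) = 0" using h1 h2 by linarith+
        then have "\<psi> a = \<psi> m \<and> \<psi> c = \<psi> m" using u by auto
        then have "a \<in> G" "c \<in> G" using aF cF' G_def by auto
        then show False using gG seg unfolding extreme_point_of_def by blast
      qed
      then have "g \<in> P" unfolding P_def E_def by (auto intro: hull_inc)
      then have "\<psi> g \<le> \<psi> p" by (rule sep)
      moreover have "\<psi> g = \<psi> m" by (rule gpsi)
      moreover have "\<psi> z \<le> \<psi> m" using mmax zF by simp
      moreover have "\<psi> z - \<psi> p = ipB B w w" using \<psi>diff[of z] w_def by simp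
      moreover have "ipB B w w > 0" using ipB_pos[OF fin ind sp w0] .
      ultimately show False by linarith
    qed
  qed
  then have "F = convex hull E" using PF P_def by auto
  moreover have "finite E" using finE E_def by simp
  ultimately show ?thesis unfolding polytope_def by blast
qed



theorem theorem2:
  fixes F :: "'a::real_normed_vector set"
  assumes "minkowski_space TYPE('a)"
    and "F face_of cball 0 1"
    and "F \<noteq> {}" and "F \<noteq> cball 0 1"
    and "\<not> polytope F"
  shows "\<exists>S::'a set. infinite S \<and> M_set S"
proof -
  note mk = assms(1) and fF = assms(2) and Fne = assms(3) and FB = assms(4) and np = assms(5)
  obtain B0 :: "'a set" where finB0: "finite B0" and spB0: "span B0 = UNIV"
    using mk unfolding minkowski_space_def by blast
  obtain B where BB0: "B \<subseteq> B0" and ind: "independent B" and B0B: "B0 \<subseteq> span B"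
    using maximal_independent_subset by blast
  have fin: "finite B" using BB0 finB0 finite_subset by blast
  have sp: "span B = UNIV"
    using span_mono[OF B0B] spB0 by (simp add: span_span) (metis UNIV_I span_span span_superset subset_antisym subset_iff top_greatest)
  have FsubB: "F \<subseteq> cball 0 1" using fF face_of_imp_subset by blast
  have cvx: "convex F" using fF face_of_def by blast
  have sph: "\<And>p. p \<in> F \<Longrightarrow> norm p = 1" using face_sphere[OF fF FB] by blast
  obtain A c \<rho> where Aaff: "\<forall>a b t. a \<in> A \<longrightarrow> b \<in> A \<longrightarrow> (1 - t) *\<^sub>R a + t *\<^sub>R b \<in> A"
    and FA: "F \<subseteq> A" and cF: "c \<in> F" and \<rho>0: "\<rho> > 0" and room: "\<forall>y\<in>A. norm (y - c) < \<rho> \<longrightarrow> y \<in> F"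
    using rel_room[OF finB0 spB0 cvx Fne] by blast
  have Aff: "\<And>a b t. a \<in> A \<Longrightarrow> b \<in> A \<Longrightarrow> (1 - t) *\<^sub>R a + t *\<^sub>R b \<in> A" using Aaff by blast
  have facep: "\<And>a b x. a \<in> cball 0 1 \<Longrightarrow> b \<in> cball 0 1 \<Longrightarrow> x \<in> F \<Longrightarrow> x \<in> open_segment a b \<Longrightarrow> a \<in> F \<and> b \<in> F"
    using fF unfolding face_of_def by blast
  have clF: "closed F"
    unfolding closed_sequential_limits
  proof (intro allI impI)
    fix x l assume H: "(\<forall>n. x n \<in> F) \<and> (x \<longlonglongrightarrow> l)"
    then have xF: "\<And>n. x n \<in> F" and lim: "x \<longlonglongrightarrow> l" by auto
    have lB: "l \<in> cball 0 1"
      by (rule Lim_in_closed_set[OF closed_cball _ trivial_limit_sequentially lim])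
         (rule always_eventually, use xF FsubB in blast)
    define t where "t = \<rho> / 4"
    have t0: "t > 0" unfolding t_def using \<rho>0 by simp
    define z where "z n = (1 + t) *\<^sub>R c - t *\<^sub>R x n" for n
    have zF: "z n \<in> F" for n
    proof -
      have "z n = (1 - (- t)) *\<^sub>R c + (- t) *\<^sub>R x n" unfolding z_def by (simp add: algebra_simps)
      moreover have "(1 - (- t)) *\<^sub>R c + (- t) *\<^sub>R x n \<in> A" using Aff FA cF xF[of n] by blast
      ultimately have zA: "z n \<in> A" by simp
      have "z n - c = t *\<^sub>R (c - x n)" unfolding z_def by (simp add: algebra_simps)
      then have "norm (z n - c) = t * norm (c - x n)" using t0 by simp
      also have "\<dots> \<le> t * (norm c + norm (x n))" using t0 by (intro mult_left_mono norm_triangle_ineq4) auto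
      also have "\<dots> \<le> t * 2" using sph[OF cF] sph[OF xF[of n]] t0 by simp
      also have "\<dots> < \<rho>" unfolding t_def using \<rho>0 by simp
      finally show ?thesis using room zA by blast
    qed
    define zl where "zl = (1 + t) *\<^sub>R c - t *\<^sub>R l"
    have zlim: "z \<longlonglongrightarrow> zl" unfolding z_def zl_def by (intro tendsto_intros lim)
    have zlB: "zl \<in> cball 0 1"
      by (rule Lim_in_closed_set[OF closed_cball _ trivial_limit_sequentially zlim])
         (rule always_eventually, use zF FsubB in blast)
    show "l \<in> F"
    proof (cases "l = zl")
      case True
      then have "(1 + t) *\<^sub>R l = (1 + t) *\<^sub>R c" unfolding zl_def by (simp add: algebra_simps)
      then have "l = c" using t0 by simp
      then show ?thesis using cF by simp
    next
      case False
      define u where "u = 1 / (1 + t)"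
      have u1: "u * (1 + t) = 1" unfolding u_def using t0 by simp
      then have u2: "1 - u = u * t" by (simp add: algebra_simps)
      have "(1 - u) *\<^sub>R l + u *\<^sub>R zl = (u * t) *\<^sub>R l + (u * (1 + t)) *\<^sub>R c - (u * t) *\<^sub>R l"
        unfolding zl_def u2 by (simp add: algebra_simps)
      then have "c = (1 - u) *\<^sub>R l + u *\<^sub>R zl" using u1 by simp
      moreover have "0 < u" "u < 1" unfolding u_def using t0 by auto
      ultimately have "c \<in> open_segment l zl" using False by (auto simp: in_segment)
      then show ?thesis using facep[OF lB zlB cF] by blast
    qed
  qed
  have cpF: "compact F"
    using fd_compact[OF fin ind sp bounded_subset[OF bounded_cball FsubB] clF] .
  define E where "E = {x. x extreme_point_of F}"
  have infE: "infinite E" using finite_extreme_polytope[OF fin ind sp cpF cvx] np E_def by blast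
  have EF: "E \<subseteq> F" unfolding E_def extreme_point_of_def by auto
  obtain e where eF: "e \<in> F" and elim: "e islimpt E"
    using Heine_Borel_imp_Bolzano_Weierstrass[OF cpF infE EF] by blast
  have P: "\<exists>x r. x \<in> A \<and> norm (x - e) < d \<and> x \<notin> F \<and> r > 0 \<and>
              (\<forall>y\<in>A. norm (y - (1/2) *\<^sub>R (e + x)) < r \<longrightarrow> y \<in> F)" if d0: "d > 0" for d
  proof -
    obtain e' where e'E: "e' \<in> E" and e'ne: "e' \<noteq> e" and e'd: "dist e' e < d / 4"
      using elim d0 unfolding islimpt_approachable by (metis divide_pos_pos zero_less_numeral)
    have e'F: "e' \<in> F" using e'E EF by blast
    define p where "p = 2 *\<^sub>R e' - e"
    have pF: "p \<notin> F"
    proof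
      assume pF: "p \<in> F"
      have "e \<noteq> p"
      proof
        assume "e = p"
        then have "2 *\<^sub>R e = 2 *\<^sub>R e'" unfolding p_def by (simp add: algebra_simps scaleR_2)
        then show False using e'ne by simp
      qed
      moreover have "e' = (1 - 1/2) *\<^sub>R e + (1/2) *\<^sub>R p" unfolding p_def by (simp add: algebra_simps)
      ultimately have "e' \<in> open_segment e p" by (auto simp: in_segment intro!: exI[of _ "1/2"])
      then show False using e'E eF pF unfolding E_def extreme_point_of_def by blast
    qed
    obtain \<eta> where \<eta>0: "\<eta> > 0" and \<eta>F: "\<And>y. dist y p < \<eta> \<Longrightarrow> y \<notin> F"
    proof -
      have "open (- F)" using clF by (simp add: open_Compl)
      then obtain \<eta> where "\<eta> > 0" "\<forall>y. dist y p < \<eta> \<longrightarrow> y \<in> - F"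
        using pF unfolding open_dist by blast
      then show ?thesis using that by auto
    qed
    define K where "K = 2 * (norm (c - e') + 1)"
    have K0: "K > 0" unfolding K_def by (simp add: add_nonneg_pos)
    define l where "l = min (1/2) (min \<eta> (d/2)) / K"
    have l0: "l > 0" unfolding l_def using \<eta>0 d0 K0 by simp
    have l1: "l < 1"
    proof -
      have "min (1/2) (min \<eta> (d/2)) \<le> 1/2" by simp
      moreover have "K \<ge> 2" unfolding K_def by simp
      ultimately show ?thesis unfolding l_def using K0 by (simp add: divide_less_eq)
    qed
    have lK: "l * K \<le> \<eta>" "l * K \<le> d / 2" "l * K > 0" unfolding l_def using K0 l0 \<eta>0 d0 by auto
    have lnorm: "2 * l * norm (c - e') < l * K" unfolding K_def using l0 by simp
    define w where "w = (1 - l) *\<^sub>R e' + l *\<^sub>R c"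
    define x where "x = 2 *\<^sub>R w - e"
    have wA: "w \<in> A" unfolding w_def using Aff FA e'F cF by blast
    have xA: "x \<in> A"
    proof -
      have "x = (1 - 2) *\<^sub>R e + 2 *\<^sub>R w" unfolding x_def by (simp add: algebra_simps)
      moreover have "(1 - 2) *\<^sub>R e + 2 *\<^sub>R w \<in> A" using Aff FA eF wA by blast
      ultimately show ?thesis by simp
    qed
    have xp: "x - p = (2 * l) *\<^sub>R (c - e')" unfolding x_def w_def p_def by (simp add: algebra_simps)
    have "dist x p < \<eta>"
    proof -
      have "dist x p = 2 * l * norm (c - e')" unfolding dist_norm xp using l0 by simp
      then show ?thesis using lnorm lK by linarith
    qed
    then have xF: "x \<notin> F" using \<eta>F by blast
    have "norm (x - e) < d"
    proof -
      have "x - e = 2 *\<^sub>R (e' - e) + (x - p)" unfolding x_def p_def by (simp add: algebra_simps scaleR_2)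
      then have "norm (x - e) \<le> norm (2 *\<^sub>R (e' - e)) + norm (x - p)"
        by (metis norm_triangle_ineq)
      also have "\<dots> = 2 * dist e' e + 2 * l * norm (c - e')" unfolding xp dist_norm using l0 by simp
      also have "\<dots> < d" using e'd lnorm lK by linarith
      finally show ?thesis .
    qed
    moreover have "\<forall>y\<in>A. norm (y - (1/2) *\<^sub>R (e + x)) < l * \<rho> \<longrightarrow> y \<in> F"
    proof (intro ballI impI)
      fix y assume yA: "y \<in> A" and yn: "norm (y - (1/2) *\<^sub>R (e + x)) < l * \<rho>"
      have hw: "(1/2) *\<^sub>R (e + x) = w" unfolding x_def by (simp add: algebra_simps)
      define q where "q = (1 - 1 / l) *\<^sub>R e' + (1 / l) *\<^sub>R y"
      have qA: "q \<in> A" unfolding q_def using Aff FA e'F yA by blast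
      have "q - c = (1 / l) *\<^sub>R (y - w)"
        unfolding q_def w_def using l0 by (simp add: algebra_simps)
      then have "norm (q - c) = norm (y - w) / l" using l0 by simp
      also have "\<dots> < \<rho>" using yn hw l0 by (simp add: divide_less_eq mult.commute)
      finally have qF: "q \<in> F" using room qA by blast
      have "y = (1 - l) *\<^sub>R e' + l *\<^sub>R q" unfolding q_def using l0 by (simp add: algebra_simps)
      then show "y \<in> F" using convexD[OF cvx e'F qF, of "1 - l" l] l0 l1 by simp
    qed
    ultimately show ?thesis using xA xF l0 \<rho>0 by (intro exI[of _ x] exI[of _ "l * \<rho>"]) auto
  qed
  obtain X :: "nat \<Rightarrow> 'a" where injX: "inj X" and XF: "\<And>k. X k \<notin> F"
    and XeF: "\<And>k. (1/2) *\<^sub>R (e + X k) \<in> F" and XX: "\<And>j k. j \<noteq> k \<Longrightarrow> (1/2) *\<^sub>R (X j + X k) \<in> F"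
    using M_construct[of A F e, OF Aff FA eF P] by blast
  show ?thesis
  proof (intro exI[of _ "range X"] conjI)
    show "infinite (range X)" using injX range_inj_infinite by blast
    show "M_set (range X)"
      unfolding M_set_def midpoint_set_def
    proof (intro conjI ballI)
      fix m assume "m \<in> {(1/2) *\<^sub>R (x + y) |x y. x \<in> range X \<and> y \<in> range X \<and> x \<noteq> y}"
      then obtain x y where m: "m = (1/2) *\<^sub>R (x + y)" and xy: "x \<in> range X" "y \<in> range X" "x \<noteq> y"
        by blast
      then obtain j k where "x = X j" "y = X k" by blast
      then have "j \<noteq> k" "m = (1/2) *\<^sub>R (X j + X k)" using m xy by auto
      then show "norm m = 1" using XX sph by blast
    next
      fix y assume "y \<in> range X"
      then obtain k where yk: "y = X k" by auto
      show "norm y > 1"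
      proof (rule ccontr)
        assume "\<not> norm y > 1"
        then have yB: "y \<in> cball 0 1" by simp
        have eB: "e \<in> cball 0 1" using eF FsubB by blast
        have "e \<noteq> y" using eF XF yk by auto
        moreover have "(1/2) *\<^sub>R (e + y) = (1 - 1/2) *\<^sub>R e + (1/2) *\<^sub>R y" by (simp add: algebra_simps)
        ultimately have "(1/2) *\<^sub>R (e + y) \<in> open_segment e y" by (auto simp: in_segment intro!: exI[of _ "1/2"])
        then have "y \<in> F" using facep[OF eB yB] XeF yk by blast
        then show False using XF yk by simp
      qed
    qed
  qed
qed


end
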